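(* Let $(X,\tau)$ be a $T_1$ topological space. Then $X$ is a D-space if and only if the following holds: for every continuous map $f:(X,\tau)\to(\mathcal P(X),\tau_{\mathcal S(X)})$ with $x\in f(x)$ for all $x\in X$, there exist a continuous neighborhood refinement map $f_*:(X,\tau)\to(\mathcal P(X),\tau_{\mathcal S(X)})$ of $f$ and a set $D\subseteq X$ such that: (1) the map $\mathcal I:(D,\tau_D)\to(\mathcal P(D),\tau_{\mathcal S(D)})$, $\mathcal I(d)=\{d\}$, where $\tau_D$ is the subspace topology on $D$, is an injective continuous map; (2) the map $g:(X,\tau)\to(\mathcal P(D),\tau_{\mathcal S(D)})$, $g(x)=f_*(x)\cap D$, is continuous and $g^{-1}(\{\emptyset\})=\emptyset$; (3) the diagonal $\{(d,d): d\in D\}$ is contained in the pullback of $g$ and $\mathcal I$ in the category of topological spaces, i.e. in $P=\{(x,d)\in X\times D: g(x)=\mathcal I(d)\}$ (a subspace of the product $X\times D$); equivalently, $g(d)=\{d\}$ for all $d\in D$.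
   Context: For a set $A$ and $a\in A$, let $\mathcal U_A(a)=\{B\subseteq A: a\in B\}$ (the principal ultrafilter generated by $a$). The principal ultrafilter topology $\tau_{\mathcal S(A)}$ on the power set $\mathcal P(A)$ is the topology generated by the subbase $\{\mathcal U_A(a): a\in A\}$. Given a continuous map $f:(X,\tau)\to(\mathcal P(X),\tau_{\mathcal S(X)})$ with $x\in f(x)$ for all $x$, a continuous neighborhood refinement map of $f$ is a continuous map $f_*:(X,\tau)\to(\mathcal P(X),\tau_{\mathcal S(X)})$ with $x\in f_*(x)\subseteq f(x)$ for all $x\in X$. An open neighborhood assignment on $(X,\tau)$ is a function $N:X\to\tau$ with $x\in N(x)$ for all $x$. A space $(X,\tau)$ is a D-space if for every open neighborhood assignment $N$ there is a closed discrete set $D\subseteq X$ with $\bigcup_{d\in D}N(d)=X$. *)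

theory Defs
  imports "HOL-Analysis.Analysis"
begin

definition pu :: "'a set \<Rightarrow> 'a \<Rightarrow> 'a set set" where
  "pu A a = {B. B \<subseteq> A \<and> a \<in> B}"

text \<open>Principal ultrafilter topology on Pow A, generated by the subbase
  {pu A a | a in A}; the whole space Pow A is included explicitly (empty
  intersection of subbase elements), as is standard for subbases.\<close>
definition put :: "'a set \<Rightarrow> 'a set topology" where
  "put A = topology_generated_by (insert (Pow A) ((pu A) ` A))"

definition closed_discrete :: "'a topology \<Rightarrow> 'a set \<Rightarrow> bool" where
  "closed_discrete X D \<longleftrightarrow> D \<subseteq> topspace X \<and> closedin X D \<and>
     (\<forall>d\<in>D. \<exists>U. openin X U \<and> U \<inter> D = {d})"

definition D_space :: "'a topology \<Rightarrow> bool" where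
  "D_space X \<longleftrightarrow> (\<forall>N. (\<forall>x\<in>topspace X. openin X (N x) \<and> x \<in> N x) \<longrightarrow>
     (\<exists>D. closed_discrete X D \<and> (\<Union>d\<in>D. N d) = topspace X))"

definition nbhd_refinement :: "'a topology \<Rightarrow> ('a \<Rightarrow> 'a set) \<Rightarrow> ('a \<Rightarrow> 'a set) \<Rightarrow> bool" where
  "nbhd_refinement X f fs \<longleftrightarrow> continuous_map X (put (topspace X)) fs \<and>
     (\<forall>x\<in>topspace X. x \<in> fs x \<and> fs x \<subseteq> f x)"

end

theory Submission
  imports Defs
begin

lemma put_S: "\<Union> (insert (Pow A) (pu A ` A)) = Pow A"
  unfolding pu_def by blast

lemma pre_pu: "(\<forall>x\<in>topspace X. g x \<subseteq> A) \<Longrightarrow>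
  g -` pu A a \<inter> topspace X = {x\<in>topspace X. a \<in> g x}"
  unfolding pu_def by blast

lemma cont_put:
  "continuous_map X (put A) g \<longleftrightarrow>
     (\<forall>x\<in>topspace X. g x \<subseteq> A) \<and> (\<forall>a\<in>A. openin X {x\<in>topspace X. a \<in> g x})"
  (is "?l \<longleftrightarrow> ?r1 \<and> ?r2")
proof -
  have "?l \<longleftrightarrow> (\<forall>U. U \<in> insert (Pow A) (pu A ` A) \<longrightarrow> openin X (g -` U \<inter> topspace X))
     \<and> g ` topspace X \<subseteq> Pow A"
    unfolding put_def continuous_on_generated_topo_iff put_S ..
  also have "\<dots> \<longleftrightarrow> (\<forall>U. U \<in> insert (Pow A) (pu A ` A) \<longrightarrow> openin X (g -` U \<inter> topspace X))
     \<and> ?r1" by blast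
  also have "\<dots> \<longleftrightarrow> ?r2 \<and> ?r1"
  proof (cases ?r1)
    case True
    have "g -` Pow A \<inter> topspace X = topspace X" using True by blast
    moreover have "(\<forall>U. U \<in> pu A ` A \<longrightarrow> openin X (g -` U \<inter> topspace X)) \<longleftrightarrow> ?r2"
      using pre_pu[OF True] by auto
    ultimately show ?thesis using True by simp
  next
    case False
    then show ?thesis by blast
  qed
  finally show ?thesis by blast
qed

theorem mainTheorem1:
  fixes X :: "'a topology"
  assumes "t1_space X"
  shows "D_space X \<longleftrightarrow>
    (\<forall>f. continuous_map X (put (topspace X)) f \<and> (\<forall>x\<in>topspace X. x \<in> f x) \<longrightarrow>
      (\<exists>fs D. nbhd_refinement X f fs \<and> D \<subseteq> topspace X \<and>
         continuous_map (subtopology X D) (put D) (\<lambda>d. {d}) \<and> inj_on (\<lambda>d. {d}) D \<and>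
         continuous_map X (put D) (\<lambda>x. fs x \<inter> D) \<and>
         {x \<in> topspace X. fs x \<inter> D = {}} = {} \<and>
         (\<forall>d\<in>D. (d, d) \<in> {(x, e) \<in> topspace X \<times> D. fs x \<inter> D = {e}})))"
  (is "?L \<longleftrightarrow> ?R")
proof
  assume L: ?L
  show ?R
  proof (intro allI impI)
    fix f assume f: "continuous_map X (put (topspace X)) f \<and> (\<forall>x\<in>topspace X. x \<in> f x)"
    have fr: "\<forall>x\<in>topspace X. f x \<subseteq> topspace X"
      and fo: "\<forall>a\<in>topspace X. openin X {x\<in>topspace X. a \<in> f x}"
      using f unfolding cont_put by blast+
    define N where "N a = {x\<in>topspace X. a \<in> f x}" for a
    have "\<forall>x\<in>topspace X. openin X (N x) \<and> x \<in> N x" using fo f by (auto simp: N_def)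
    then obtain D where D: "closed_discrete X D" "(\<Union>d\<in>D. N d) = topspace X"
      using L unfolding D_space_def by blast
    have DX: "D \<subseteq> topspace X" and Dc: "closedin X D"
      and Dd: "\<forall>d\<in>D. \<exists>U. openin X U \<and> U \<inter> D = {d}"
      using D(1) unfolding closed_discrete_def by auto
    have Dm: "closedin X (D - {a})" if "a \<in> D" for a
    proof -
      from bspec[OF Dd that] obtain U where U: "openin X U" "U \<inter> D = {a}" by (elim exE conjE)
      have "D - {a} = D \<inter> (topspace X - U)" using U DX by auto
      moreover have "closedin X (D \<inter> (topspace X - U))"
        using Dc U(1) by (intro closedin_Int closedin_diff closedin_topspace)
      ultimately show ?thesis by simp
    qed
    define fs where "fs x = f x - (if x \<in> D then D - {x} else {})" for x
    have fsD: "fs x \<inter> D = {x}" if "x \<in> D" for x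
    proof -
      have "x \<in> f x" using f DX that by blast
      then show ?thesis using that by (auto simp: fs_def)
    qed
    have fsN: "fs x \<inter> D = f x \<inter> D" if "x \<notin> D" for x
      using that by (auto simp: fs_def)
    have pre: "{x\<in>topspace X. a \<in> fs x} =
      {x\<in>topspace X. a \<in> f x} \<inter> (if a \<in> D then topspace X - (D - {a}) else topspace X)" for a
      by (auto simp: fs_def)
    have fsc: "continuous_map X (put (topspace X)) fs"
      unfolding cont_put
    proof (intro conjI ballI)
      fix x assume "x \<in> topspace X" then show "fs x \<subseteq> topspace X" using fr by (auto simp: fs_def)
    next
      fix a assume a: "a \<in> topspace X"
      show "openin X {x\<in>topspace X. a \<in> fs x}"
      proof (cases "a \<in> D")
        case True
        have "openin X (topspace X - (D - {a}))" using Dm[OF True] by (rule openin_diff[OF openin_topspace])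
        then show ?thesis unfolding pre using True fo a by (simp add: openin_Int)
      next
        case False
        have "{x\<in>topspace X. a \<in> fs x} = {x\<in>topspace X. a \<in> f x}"
          unfolding pre using False by auto
        then show ?thesis using fo a by simp
      qed
    qed
    have nr: "nbhd_refinement X f fs"
    proof -
      have "\<forall>x\<in>topspace X. x \<in> fs x \<and> fs x \<subseteq> f x" using f by (auto simp: fs_def)
      then show ?thesis unfolding nbhd_refinement_def using fsc by blast
    qed
    have c1: "continuous_map (subtopology X D) (put D) (\<lambda>d. {d})"
      unfolding cont_put
    proof (intro conjI ballI)
      fix x assume "x \<in> topspace (subtopology X D)" then show "{x} \<subseteq> D" by auto
    next
      fix a assume a: "a \<in> D"
      from bspec[OF Dd a] obtain U where U: "openin X U" "U \<inter> D = {a}" by (elim exE conjE)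
      have "{x \<in> topspace (subtopology X D). a \<in> {x}} = U \<inter> D" using U a DX by auto
      then show "openin (subtopology X D) {x \<in> topspace (subtopology X D). a \<in> {x}}"
        using U by (auto simp: openin_subtopology)
    qed
    have c2: "continuous_map X (put D) (\<lambda>x. fs x \<inter> D)"
      unfolding cont_put
    proof (intro conjI ballI)
      fix a assume a: "a \<in> D"
      have "{x\<in>topspace X. a \<in> fs x \<inter> D} = {x\<in>topspace X. a \<in> fs x}" using a by auto
      moreover have "openin X {x\<in>topspace X. a \<in> fs x}"
        using fsc a DX unfolding cont_put by blast
      ultimately show "openin X {x\<in>topspace X. a \<in> fs x \<inter> D}" by simp
    qed auto
    have ne: "{x \<in> topspace X. fs x \<inter> D = {}} = {}"
    proof -
      have "fs x \<inter> D \<noteq> {}" if "x \<in> topspace X" for x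
      proof (cases "x \<in> D")
        case True then show ?thesis using fsD by auto
      next
        case False
        from that D(2) obtain d where "d \<in> D" "x \<in> N d" by auto
        then show ?thesis using fsN[OF False] by (auto simp: N_def)
      qed
      then show ?thesis by auto
    qed
    have inj: "inj_on (\<lambda>d. {d}) D" by (auto simp: inj_on_def)
    have dg: "\<forall>d\<in>D. (d, d) \<in> {(x, e) \<in> topspace X \<times> D. fs x \<inter> D = {e}}"
      using fsD DX by auto
    show "\<exists>fs D. nbhd_refinement X f fs \<and> D \<subseteq> topspace X \<and>
         continuous_map (subtopology X D) (put D) (\<lambda>d. {d}) \<and> inj_on (\<lambda>d. {d}) D \<and>
         continuous_map X (put D) (\<lambda>x. fs x \<inter> D) \<and>
         {x \<in> topspace X. fs x \<inter> D = {}} = {} \<and>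
         (\<forall>d\<in>D. (d, d) \<in> {(x, e) \<in> topspace X \<times> D. fs x \<inter> D = {e}})"
      using nr DX c1 c2 ne inj dg by blast
  qed
next
  assume R: ?R
  show ?L
    unfolding D_space_def
  proof (intro allI impI)
    fix N assume N: "\<forall>x\<in>topspace X. openin X (N x) \<and> x \<in> N x"
    define f where "f x = {y\<in>topspace X. x \<in> N y}" for x
    have pre: "{x\<in>topspace X. a \<in> f x} = N a" if "a \<in> topspace X" for a
      using N that openin_subset by (fastforce simp: f_def)
    have fc: "continuous_map X (put (topspace X)) f"
      unfolding cont_put using pre N by (auto simp: f_def)
    have fx: "\<forall>x\<in>topspace X. x \<in> f x" using N by (auto simp: f_def)
    obtain fs D where fs: "nbhd_refinement X f fs" and DX: "D \<subseteq> topspace X"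
      and c1: "continuous_map (subtopology X D) (put D) (\<lambda>d. {d})"
      and c2: "continuous_map X (put D) (\<lambda>x. fs x \<inter> D)"
      and ne: "{x \<in> topspace X. fs x \<inter> D = {}} = {}"
      and dg: "\<forall>d\<in>D. (d, d) \<in> {(x, e) \<in> topspace X \<times> D. fs x \<inter> D = {e}}"
      using mp[OF spec[OF R, of f] conjI[OF fc fx]] by (elim exE conjE) (rule that, assumption+)
    have fsD: "fs d \<inter> D = {d}" if "d \<in> D" for d using dg that by auto
    have fsf: "\<forall>x\<in>topspace X. fs x \<subseteq> f x" using fs unfolding nbhd_refinement_def by auto
    have W: "openin X {x\<in>topspace X. a \<in> fs x \<inter> D}" if "a \<in> D" for a
      using c2 that unfolding cont_put by blast
    have disc: "\<forall>d\<in>D. \<exists>U. openin X U \<and> U \<inter> D = {d}"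
    proof
      fix d assume d: "d \<in> D"
      have "openin (subtopology X D) {x \<in> topspace (subtopology X D). d \<in> {x}}"
        using c1 d unfolding cont_put by blast
      moreover have "{x \<in> topspace (subtopology X D). d \<in> {x}} = {d}" using d DX by auto
      ultimately obtain U where "openin X U" "{d} = U \<inter> D"
        by (auto simp: openin_subtopology)
      then show "\<exists>U. openin X U \<and> U \<inter> D = {d}" by auto
    qed
    have cl: "closedin X D"
    proof -
      have "openin X (topspace X - D)"
      proof (subst openin_subopen, intro ballI)
        fix x assume x: "x \<in> topspace X - D"
        then obtain d where d: "d \<in> D" "d \<in> fs x" using ne by auto
        let ?W = "{y\<in>topspace X. d \<in> fs y \<inter> D} - {d}"
        have "openin X ?W"
          using W[OF d(1)] assms d(1) DX
          by (simp add: openin_diff t1_space_closedin_singleton subset_iff)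
        moreover have "x \<in> ?W" using x d by auto
        moreover have "?W \<subseteq> topspace X - D"
        proof
          fix y assume y: "y \<in> ?W"
          have "y \<notin> D"
          proof
            assume "y \<in> D" then have "fs y \<inter> D = {y}" by (rule fsD)
            then show False using y d by auto
          qed
          then show "y \<in> topspace X - D" using y by auto
        qed
        ultimately show "\<exists>T. openin X T \<and> x \<in> T \<and> T \<subseteq> topspace X - D" by blast
      qed
      then show ?thesis using DX by (simp add: closedin_def)
    qed
    have cov: "(\<Union>d\<in>D. N d) = topspace X"
    proof
      show "(\<Union>d\<in>D. N d) \<subseteq> topspace X" using N DX openin_subset by blast
    next
      show "topspace X \<subseteq> (\<Union>d\<in>D. N d)"
      proof
        fix x assume x: "x \<in> topspace X"
        then obtain d where d: "d \<in> D" "d \<in> fs x" using ne by auto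
        then have "d \<in> f x" using fsf x by auto
        then show "x \<in> (\<Union>d\<in>D. N d)" using d by (auto simp: f_def)
      qed
    qed
    show "\<exists>D. closed_discrete X D \<and> (\<Union>d\<in>D. N d) = topspace X"
      using DX cl disc cov unfolding closed_discrete_def by blast
  qed
qed

end
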